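(* Let $B$ be an affine domain over an infinite field $k$. Let $f \in B$ be such that $f - \lambda$ is a prime element of $B$ for infinitely many $\lambda \in k$. Let $\phi : B \to B[U]$ be a non-trivial exponential map on $B$ such that $f \in B^{\phi}$. Then there exists $\beta \in k$ such that $f-\beta$ is a prime element of $B$ and $\phi$ induces a non-trivial exponential map on $B/(f-\beta)B$, i.e. the composite $B \xrightarrow{\phi} B[U] \to (B/(f-\beta)B)[U]$ factors through a map $\phi_1 : B/(f-\beta)B \to (B/(f-\beta)B)[U]$ which is a non-trivial exponential map.
   Context: For a $k$-algebra $A$ and an indeterminate $U$ over $A$, a $k$-algebra homomorphism $\phi = \phi_U : A \to A[U]$ is an exponential map on $A$ if (i) $\varepsilon_0 \circ \phi_U$ is the identity of $A$, where $\varepsilon_0 : A[U]\to A$ is evaluation at $U=0$; and (ii) $\phi_V \circ \phi_U = \phi_{V+U}$, where $\phi_V: A \to A[V]$ (same map with $U$ replaced by another indeterminate $V$) is extended to $A[U] \to A[V,U]$ by $\phi_V(U)=U$. The ring of invariants is $A^{\phi} = \{a\in A : \phi(a) = a\}$, and $\phi$ is non-trivial if $A^\phi \neq A$. *)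

theory Defs
  imports "HOL-Algebra.Algebra"
begin

text \<open>Univariate polynomial rings are HOL-Algebra's UP R; the two-variable ring A[V,U]
  is represented as (A[V])[U] = UP (UP R), the outer variable being U.\<close>

definition indet_U :: "('a, 'm) ring_scheme \<Rightarrow> nat \<Rightarrow> (nat \<Rightarrow> 'a)" where
  "indet_U R = monom (UP (UP R)) \<one>\<^bsub>UP R\<^esub> 1"

definition indet_V :: "('a, 'm) ring_scheme \<Rightarrow> nat \<Rightarrow> (nat \<Rightarrow> 'a)" where
  "indet_V R = monom (UP (UP R)) (monom (UP R) \<one>\<^bsub>R\<^esub> 1) 0"

definition const2 :: "('a, 'm) ring_scheme \<Rightarrow> 'a \<Rightarrow> nat \<Rightarrow> (nat \<Rightarrow> 'a)" where
  "const2 R c = monom (UP (UP R)) (monom (UP R) c 0) 0"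

text \<open>An exponential map on the K-algebra R (K a subfield of R):
  a K-algebra homomorphism phi : R \<rightarrow> R[U] such that (i) evaluation at U = 0 after phi is
  the identity and (ii) phi_V \<circ> phi_U = phi_{V+U}, where phi_V acts on R[U] coefficientwise
  (fixing U), and phi_{V+U}(a) is phi(a) with U replaced by V+U.\<close>
definition exp_map :: "('a, 'm) ring_scheme \<Rightarrow> 'a set \<Rightarrow> ('a \<Rightarrow> nat \<Rightarrow> 'a) \<Rightarrow> bool" where
  "exp_map R K \<phi> \<longleftrightarrow>
     \<phi> \<in> ring_hom R (UP R) \<and>
     (\<forall>c\<in>K. \<phi> c = monom (UP R) c 0) \<and>
     (\<forall>a\<in>carrier R. coeff (UP R) (\<phi> a) 0 = a) \<and>
     (\<forall>a\<in>carrier R.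
        (\<lambda>n. \<phi> (coeff (UP R) (\<phi> a) n))
        = eval R (UP (UP R)) (const2 R) (indet_V R \<oplus>\<^bsub>UP (UP R)\<^esub> indet_U R) (\<phi> a))"

definition invariants :: "('a, 'm) ring_scheme \<Rightarrow> ('a \<Rightarrow> nat \<Rightarrow> 'a) \<Rightarrow> 'a set" where
  "invariants R \<phi> = {a \<in> carrier R. \<phi> a = monom (UP R) a 0}"

definition nontrivial_exp :: "('a, 'm) ring_scheme \<Rightarrow> ('a \<Rightarrow> nat \<Rightarrow> 'a) \<Rightarrow> bool" where
  "nontrivial_exp R \<phi> \<longleftrightarrow> invariants R \<phi> \<noteq> carrier R"

definition affine_domain :: "('a, 'm) ring_scheme \<Rightarrow> 'a set \<Rightarrow> bool" where
  "affine_domain R K \<longleftrightarrow> domain R \<and> subfield K R \<and>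
     (\<exists>S. finite S \<and> S \<subseteq> carrier R \<and> generate_ring R (K \<union> S) = carrier R)"

end

theory Submission
  imports Defs
begin

lemma (in cring) subring_ideal_crit:
  assumes A: "subring A R" and T: "T \<subseteq> A" "\<zero> \<in> T"
    and add: "\<And>x y. x \<in> T \<Longrightarrow> y \<in> T \<Longrightarrow> x \<oplus> y \<in> T"
    and sm: "\<And>c x. c \<in> A \<Longrightarrow> x \<in> T \<Longrightarrow> c \<otimes> x \<in> T"
  shows "ideal T (R\<lparr>carrier := A\<rparr>)"
proof -
  interpret S: ring "R\<lparr>carrier := A\<rparr>" using subring_is_ring[OF A] .
  have AR: "A \<subseteq> carrier R" using subringE(1)[OF A] .
  have inv: "\<ominus>\<^bsub>R\<lparr>carrier := A\<rparr>\<^esub> x \<in> T" if x: "x \<in> T" for x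
  proof -
    have xA: "x \<in> A" using x T by auto
    have "\<ominus>\<^bsub>R\<lparr>carrier := A\<rparr>\<^esub> x = \<ominus>\<^bsub>R\<lparr>carrier := A\<rparr>\<^esub> (\<one>\<^bsub>R\<lparr>carrier := A\<rparr>\<^esub> \<otimes>\<^bsub>R\<lparr>carrier := A\<rparr>\<^esub> x)"
      using xA AR by auto
    also have "\<dots> = (\<ominus>\<^bsub>R\<lparr>carrier := A\<rparr>\<^esub> \<one>\<^bsub>R\<lparr>carrier := A\<rparr>\<^esub>) \<otimes>\<^bsub>R\<lparr>carrier := A\<rparr>\<^esub> x"
      using xA S.l_minus[OF S.one_closed, of x] by simp
    finally show ?thesis using sm[of "\<ominus>\<^bsub>R\<lparr>carrier := A\<rparr>\<^esub> \<one>\<^bsub>R\<lparr>carrier := A\<rparr>\<^esub>" x] x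
      S.a_inv_closed[OF S.one_closed] by simp
  qed
  show ?thesis
  proof (rule idealI[OF S.ring_axioms])
    show "subgroup T (add_monoid (R\<lparr>carrier := A\<rparr>))"
      using T add inv[unfolded a_inv_def] by (auto intro!: subgroup.intro)
  next
    fix a x assume "a \<in> T" "x \<in> carrier (R\<lparr>carrier := A\<rparr>)"
    then show "x \<otimes>\<^bsub>R\<lparr>carrier := A\<rparr>\<^esub> a \<in> T" "a \<otimes>\<^bsub>R\<lparr>carrier := A\<rparr>\<^esub> x \<in> T"
    proof -
      have "x \<otimes> a \<in> T" using sm \<open>a \<in> T\<close> \<open>x \<in> carrier (R\<lparr>carrier := A\<rparr>)\<close> by simp
      moreover have "a \<otimes> x = x \<otimes> a" using \<open>a \<in> T\<close> \<open>x \<in> carrier (R\<lparr>carrier := A\<rparr>)\<close> T AR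
        by (intro m_comm) auto
      ultimately show "x \<otimes>\<^bsub>R\<lparr>carrier := A\<rparr>\<^esub> a \<in> T" "a \<otimes>\<^bsub>R\<lparr>carrier := A\<rparr>\<^esub> x \<in> T" by auto
    qed
  qed
qed

primrec gseq :: "('b set \<Rightarrow> 'b) \<Rightarrow> nat \<Rightarrow> 'b set" where
  "gseq nx 0 = {}" | "gseq nx (Suc n) = insert (nx (gseq nx n)) (gseq nx n)"

lemma gseq_mono: "m \<le> n \<Longrightarrow> gseq nx m \<subseteq> gseq nx n"
  by (induct n) (auto simp: le_Suc_eq)

lemma gseq_mem: "i < n \<Longrightarrow> nx (gseq nx i) \<in> gseq nx n"
  using gseq_mono[of "Suc i" n nx] by auto

lemma (in ring) coeff_in_sub:
  assumes "set p \<subseteq> A" "\<zero> \<in> A" shows "coeff p i \<in> A"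
proof -
  have "coeff p i \<in> set p \<union> {\<zero>}" using coeff_img(3)[of p] rangeI[of "coeff p" i] by simp
  then show ?thesis using assms by auto
qed

lemma (in domain) hilbert_basis:
  assumes A: "subring A R" and N: "noetherian_ring (R\<lparr>carrier := A\<rparr>)"
  shows "noetherian_ring (A[X])"
proof -
  interpret P: domain "A[X]" using univ_poly_is_domain[OF A] .
  interpret S: noetherian_ring "R\<lparr>carrier := A\<rparr>" using N .
  have AR: "A \<subseteq> carrier R" using subringE(1)[OF A] .
  have zA: "\<zero> \<in> A" using subringE(2)[OF A] .
  show ?thesis
  proof (rule P.noetherian_ringI, rule ccontr)
    fix J assume J: "ideal J (A[X])" and nfg: "\<not> (\<exists>F \<subseteq> carrier (A[X]). finite F \<and> J = Idl\<^bsub>A[X]\<^esub> F)"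
    have JP: "J \<subseteq> carrier (A[X])" using J by (simp add: ideal.Icarr subsetI)
    have ne: "\<exists>g. g \<in> J - Idl\<^bsub>A[X]\<^esub> F" if "finite F" "F \<subseteq> J" for F
    proof -
      have "Idl\<^bsub>A[X]\<^esub> F \<subseteq> J" using P.genideal_minimal[OF J that(2)] .
      moreover have "J \<noteq> Idl\<^bsub>A[X]\<^esub> F" using nfg that JP by blast
      ultimately show ?thesis by blast
    qed
    define nx where "nx F = (SOME g. g \<in> J - Idl\<^bsub>A[X]\<^esub> F \<and> (\<forall>h \<in> J - Idl\<^bsub>A[X]\<^esub> F. degree g \<le> degree h))" for F
    have nx: "nx F \<in> J - Idl\<^bsub>A[X]\<^esub> F \<and> (\<forall>h \<in> J - Idl\<^bsub>A[X]\<^esub> F. degree (nx F) \<le> degree h)"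
      if FF: "finite F" "F \<subseteq> J" for F
    proof -
      obtain g0 where "g0 \<in> J - Idl\<^bsub>A[X]\<^esub> F" using ne[OF FF] by blast
      then have "\<exists>g. g \<in> J - Idl\<^bsub>A[X]\<^esub> F \<and> (\<forall>h. h \<in> J - Idl\<^bsub>A[X]\<^esub> F \<longrightarrow> degree g \<le> degree h)"
        by (rule ex_has_least_nat)
      then have ex: "\<exists>g. g \<in> J - Idl\<^bsub>A[X]\<^esub> F \<and> (\<forall>h \<in> J - Idl\<^bsub>A[X]\<^esub> F. degree g \<le> degree h)" by blast
      show ?thesis unfolding nx_def by (rule someI_ex[OF ex])
    qed
    define G where "G = gseq nx"
    have G: "finite (G n) \<and> G n \<subseteq> J" for n
      by (induct n) (use nx in \<open>auto simp: G_def\<close>)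
    define f where "f n = nx (G n)" for n
    have fJ: "f n \<in> J" "f n \<notin> Idl\<^bsub>A[X]\<^esub> (G n)" for n using nx[of "G n"] G[of n] by (auto simp: f_def)
    have fmin: "h \<in> J \<Longrightarrow> h \<notin> Idl\<^bsub>A[X]\<^esub> (G n) \<Longrightarrow> degree (f n) \<le> degree h" for h n
      using nx[of "G n"] G[of n] by (auto simp: f_def)
    have fG: "i < n \<Longrightarrow> f i \<in> G n" for i n unfolding f_def G_def by (rule gseq_mem)
    have GP: "G n \<subseteq> carrier (A[X])" for n using G JP by blast
    have degmono: "degree (f m) \<le> degree (f n)" if "m \<le> n" for m n
    proof -
      have "Idl\<^bsub>A[X]\<^esub> (G m) \<subseteq> Idl\<^bsub>A[X]\<^esub> (G n)"
        by (rule P.subset_Idl_subset[OF GP]) (use gseq_mono[OF that] in \<open>simp add: G_def\<close>)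
      then show ?thesis using fmin[of "f n" m] fJ[of n] by blast
    qed
    have fP: "f n \<in> carrier (A[X])" for n using fJ JP by blast
    have zIdl: "[] \<in> Idl\<^bsub>A[X]\<^esub> (G n)" for n
      using additive_subgroup.zero_closed[OF ideal.axioms(1)[OF P.genideal_ideal[OF GP]]]
      by (simp add: univ_poly_zero)
    have fne: "f n \<noteq> []" for n using fJ(2)[of n] zIdl[of n] by auto
    have fpoly: "polynomial A (f n)" for n using fP univ_poly_carrier by blast
    define a where "a n = lead_coeff (f n)" for n
    have aA1: "a n \<in> A" for n using polynomial_incl[OF fpoly[of n]] hd_in_set[OF fne[of n]] unfolding a_def by blast
    have aA2: "a n \<noteq> \<zero>" for n using fpoly[of n] fne[of n] unfolding a_def polynomial_def by blast
    note aA = aA1 aA2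
    define I where "I n = Idl\<^bsub>R\<lparr>carrier := A\<rparr>\<^esub> (a ` {..<n})" for n
    have Iid: "ideal (I n) (R\<lparr>carrier := A\<rparr>)" for n
      unfolding I_def by (rule S.genideal_ideal) (use aA in auto)
    have Imono: "I m \<subseteq> I n" if "m \<le> n" for m n
      unfolding I_def by (rule S.subset_Idl_subset) (use aA that in auto)
    have "subset.chain {I. ideal I (R\<lparr>carrier := A\<rparr>)} (range I)"
    proof -
      have ch: "x \<subseteq> y \<or> y \<subseteq> x" if xy: "x \<in> range I" "y \<in> range I" for x y
      proof -
        obtain i j where ij: "x = I i" "y = I j" using xy by blast
        show ?thesis
        proof (cases "i \<le> j")
          case True then show ?thesis using Imono[OF True] ij by simp
        next
          case False then have ji: "j \<le> i" by simp
          show ?thesis using Imono[OF ji] ij by simp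
        qed
      qed
      show ?thesis unfolding pred_on.chain_def using Iid ch by blast
    qed
    then have "\<Union>(range I) \<in> range I" by (intro S.ideal_chain_is_trivial) auto
    then obtain m where m: "\<Union>(range I) = I m" by blast
    have am: "a m \<in> I m"
    proof -
      have "a m \<in> I (Suc m)" unfolding I_def by (rule subsetD[OF S.genideal_self]) (use aA in auto)
      then show ?thesis using m by blast
    qed
    define d where "d = degree (f m)"
    define T where "T = {coeff g d | g. g \<in> Idl\<^bsub>A[X]\<^esub> (G m) \<and> degree g \<le> d}"
    have IdlP: "Idl\<^bsub>A[X]\<^esub> (G m) \<subseteq> carrier (A[X])"
      using ideal.Icarr[OF P.genideal_ideal[OF GP[of m]]] by blast
    have Idl_id: "ideal (Idl\<^bsub>A[X]\<^esub> (G m)) (A[X])" using P.genideal_ideal[OF GP] .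
    have zT: "\<zero> \<in> T" unfolding T_def using zIdl[of m] by force
    have Tid: "ideal T (R\<lparr>carrier := A\<rparr>)"
    proof (rule subring_ideal_crit[OF A])
      show "T \<subseteq> A"
      proof
        fix x assume "x \<in> T"
        then obtain g where gg: "g \<in> Idl\<^bsub>A[X]\<^esub> (G m)" "x = coeff g d" unfolding T_def by blast
        then have "set g \<subseteq> A" using IdlP polynomial_incl[of A g] univ_poly_carrier[of R A g] by blast
        then show "x \<in> A" using coeff_in_sub zA gg by simp
      qed
      show "\<zero> \<in> T" by (rule zT)
    next
      fix x y assume "x \<in> T" "y \<in> T"
      then obtain g1 g2 where g: "g1 \<in> Idl\<^bsub>A[X]\<^esub> (G m)" "degree g1 \<le> d" "x = coeff g1 d"
        "g2 \<in> Idl\<^bsub>A[X]\<^esub> (G m)" "degree g2 \<le> d" "y = coeff g2 d" unfolding T_def by blast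
      have "polynomial A g1" "polynomial A g2" using g IdlP univ_poly_carrier by blast+
      then have gc: "set g1 \<subseteq> carrier R" "set g2 \<subseteq> carrier R"
        using polynomial_in_carrier[OF A] by auto
      have "g1 \<oplus>\<^bsub>A[X]\<^esub> g2 \<in> Idl\<^bsub>A[X]\<^esub> (G m)"
        using g Idl_id by (simp add: ideal.axioms(1) additive_subgroup.a_closed)
      moreover have "degree (g1 \<oplus>\<^bsub>A[X]\<^esub> g2) \<le> d"
        using poly_add_degree[of g1 g2] g by (simp add: univ_poly_add)
      moreover have "coeff (g1 \<oplus>\<^bsub>A[X]\<^esub> g2) d = x \<oplus> y"
        using poly_add_coeff[OF gc] g by (simp add: univ_poly_add)
      ultimately show "x \<oplus> y \<in> T" unfolding T_def by force
    next
      fix c x assume c: "c \<in> A" and "x \<in> T"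
      then obtain g where g: "g \<in> Idl\<^bsub>A[X]\<^esub> (G m)" "degree g \<le> d" "x = coeff g d" unfolding T_def by blast
      have gp: "polynomial A g" using g IdlP univ_poly_carrier by blast
      have gc: "set g \<subseteq> carrier R" using polynomial_in_carrier[OF A gp] .
      show "c \<otimes> x \<in> T"
      proof (cases "c = \<zero>")
        case True
        then have "c \<otimes> x = \<zero>" using g gc by simp
        then show ?thesis using zT by simp
      next
        case False
        have cP: "[c] \<in> carrier (A[X])" using c False const_is_polynomial univ_poly_carrier by blast
        have "[c] \<otimes>\<^bsub>A[X]\<^esub> g \<in> Idl\<^bsub>A[X]\<^esub> (G m)"
          using ideal.I_l_closed[OF Idl_id g(1) cP] .
        moreover have eq: "[c] \<otimes>\<^bsub>A[X]\<^esub> g = map (\<lambda>b. c \<otimes> b) g"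
          using poly_mult_const(1)[OF A gp] c False by (simp add: univ_poly_mult)
        moreover have "coeff (map (\<lambda>b. c \<otimes> b) g) d = c \<otimes> x"
          using scalar_coeff[of c g] c AR g by auto
        moreover have "degree (map (\<lambda>b. c \<otimes> b) g) \<le> d" using g by simp
        ultimately have "map (\<lambda>b. c \<otimes> b) g \<in> Idl\<^bsub>A[X]\<^esub> (G m) \<and> degree (map (\<lambda>b. c \<otimes> b) g) \<le> d \<and> c \<otimes> x = coeff (map (\<lambda>b. c \<otimes> b) g) d" by simp
        then show ?thesis unfolding T_def by blast
      qed
    qed
    have aT: "a ` {..<m} \<subseteq> T"
    proof
      fix y assume "y \<in> a ` {..<m}"
      then obtain i where i: "i < m" "y = a i" by blast
      define mo where "mo = monom \<one> (d - degree (f i))"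
      have "\<one> \<in> A - {\<zero>}" using subringE(3)[OF A] one_not_zero by blast
      then have moP: "polynomial A mo" unfolding mo_def by (rule monom_is_polynomial[OF A])
      have mone: "mo \<noteq> []" unfolding mo_def monom_def by simp
      define g where "g = mo \<otimes>\<^bsub>A[X]\<^esub> f i"
      have fiI: "f i \<in> Idl\<^bsub>A[X]\<^esub> (G m)" using P.genideal_self[OF GP[of m]] fG[OF i(1)] by blast
      have gIdl: "g \<in> Idl\<^bsub>A[X]\<^esub> (G m)"
        unfolding g_def by (rule ideal.I_l_closed[OF Idl_id fiI moP[unfolded univ_poly_carrier]])
      have dfi: "degree (f i) \<le> d" unfolding d_def using degmono i by simp
      have gdeg: "degree g = d" unfolding g_def univ_poly_mult
        using poly_mult_degree_eq[OF A moP fpoly[of i]] mone fne[of i] dfi by (simp add: mo_def monom_def)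
      have gne: "g \<noteq> []" unfolding g_def univ_poly_mult using poly_mult_integral[OF A moP fpoly[of i]] mone fne by blast
      have "lead_coeff g = \<one> \<otimes> a i" unfolding g_def univ_poly_mult a_def
        using poly_mult_lead_coeff[OF A moP fpoly[of i] mone fne[of i]] by (simp add: mo_def monom_def)
      moreover have "a i \<in> carrier R" using aA AR by blast
      ultimately have "coeff g d = a i" using lead_coeff_simp[OF gne] gdeg by simp
      then show "y \<in> T" unfolding T_def using gIdl gdeg i by force
    qed
    have "I m \<subseteq> T" unfolding I_def by (rule S.genideal_minimal[OF Tid aT])
    then have "a m \<in> T" using am by blast
    then obtain g where g: "g \<in> Idl\<^bsub>A[X]\<^esub> (G m)" "degree g \<le> d" "coeff g d = a m"
      unfolding T_def by auto
    have gP: "g \<in> carrier (A[X])" using g IdlP by blast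
    have gJ: "g \<in> J" using g(1) P.genideal_minimal[OF J conjunct2[OF G[of m]]] by (rule subsetD[rotated])
    define h where "h = f m \<ominus>\<^bsub>A[X]\<^esub> g"
    have hP: "h \<in> carrier (A[X])" unfolding h_def using fP gP by simp
    have hJ: "h \<in> J" unfolding h_def using fJ(1)[of m] gJ J
      by (simp add: ideal.axioms(1) additive_subgroup.a_closed additive_subgroup.a_inv_closed a_minus_def)
    have hg: "h \<oplus>\<^bsub>A[X]\<^esub> g = f m"
    proof -
      have "h \<oplus>\<^bsub>A[X]\<^esub> g = f m \<oplus>\<^bsub>A[X]\<^esub> (\<ominus>\<^bsub>A[X]\<^esub> g \<oplus>\<^bsub>A[X]\<^esub> g)"
        unfolding h_def P.minus_eq using fP gP by (simp add: P.a_assoc)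
      also have "\<dots> = f m" by (subst P.l_neg[OF gP]) (simp add: fP)
      finally show ?thesis .
    qed
    have hnI: "h \<notin> Idl\<^bsub>A[X]\<^esub> (G m)"
    proof
      assume "h \<in> Idl\<^bsub>A[X]\<^esub> (G m)"
      then have "h \<oplus>\<^bsub>A[X]\<^esub> g \<in> Idl\<^bsub>A[X]\<^esub> (G m)"
        using g(1) Idl_id by (simp add: ideal.axioms(1) additive_subgroup.a_closed)
      then show False using hg fJ(2) by simp
    qed
    have dle: "d \<le> degree h" unfolding d_def by (rule fmin[OF hJ hnI])
    have hdeg: "degree h \<le> d"
    proof -
      have "degree (\<ominus>\<^bsub>A[X]\<^esub> g) = degree g" by (rule univ_poly_a_inv_degree[OF A gP])
      then show ?thesis unfolding h_def a_minus_def univ_poly_add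
        using poly_add_degree[of "f m" "\<ominus>\<^bsub>A[X]\<^esub> g"] g(2) d_def by simp
    qed
    have hpoly: "polynomial A h" using hP univ_poly_carrier by blast
    have hc: "set h \<subseteq> carrier R" using polynomial_in_carrier[OF A hpoly] .
    have gc: "set g \<subseteq> carrier R" using polynomial_in_carrier[OF A, of g] gP univ_poly_carrier[of R A g] by blast
    have "coeff (f m) d = coeff h d \<oplus> coeff g d"
      using poly_add_coeff[OF hc gc] hg by (simp add: univ_poly_add)
    moreover have "coeff (f m) d = a m" unfolding d_def a_def using lead_coeff_simp[OF fne] .
    moreover have amc: "a m \<in> carrier R" using aA AR by blast
    ultimately have "coeff h d \<oplus> a m = \<zero> \<oplus> a m" using g(3) by simp
    then have hd0: "coeff h d = \<zero>" using amc coeff_in_carrier[OF hc, of d] by simp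
    have hne: "h \<noteq> []" using hnI zIdl by auto
    have "coeff h (degree h) \<noteq> \<zero>" using lead_coeff_simp[OF hne] hpoly hne unfolding polynomial_def by auto
    then show False using hd0 dle hdeg by simp
  qed
qed

lemma noeth_image:
  assumes h: "ring_hom_ring P S h" and surj: "h ` carrier P = carrier S" and N: "noetherian_ring P"
  shows "noetherian_ring S"
proof -
  interpret h: ring_hom_ring P S h using h .
  interpret P: noetherian_ring P using N .
  show ?thesis
  proof (rule h.S.noetherian_ringI)
    fix J assume J: "ideal J S"
    have JS: "J \<subseteq> carrier S" using J by (simp add: ideal.Icarr subsetI)
    have J': "ideal {r \<in> carrier P. h r \<in> J} P" by (rule h.ideal_vimage[OF J])
    obtain F where F: "F \<subseteq> carrier P" "finite F" "{r \<in> carrier P. h r \<in> J} = Idl\<^bsub>P\<^esub> F"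
      using P.finetely_gen[OF J'] by blast
    have FJ: "F \<subseteq> {r \<in> carrier P. h r \<in> J}" using F(3) h.R.genideal_self[OF F(1)] by simp
    have hF: "h ` F \<subseteq> carrier S" using F(1) by auto
    have "J = Idl\<^bsub>S\<^esub> (h ` F)"
    proof
      show "Idl\<^bsub>S\<^esub> (h ` F) \<subseteq> J" using FJ by (intro h.S.genideal_minimal[OF J]) blast
    next
      show "J \<subseteq> Idl\<^bsub>S\<^esub> (h ` F)"
      proof
        fix y assume y: "y \<in> J"
        then obtain x where x: "x \<in> carrier P" "y = h x" using surj JS by blast
        have K: "ideal {r \<in> carrier P. h r \<in> Idl\<^bsub>S\<^esub> (h ` F)} P"
          by (rule h.ideal_vimage[OF h.S.genideal_ideal[OF hF]])
        have "F \<subseteq> {r \<in> carrier P. h r \<in> Idl\<^bsub>S\<^esub> (h ` F)}"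
          using F(1) h.S.genideal_self[OF hF] by blast
        then have "Idl\<^bsub>P\<^esub> F \<subseteq> {r \<in> carrier P. h r \<in> Idl\<^bsub>S\<^esub> (h ` F)}"
          by (rule h.R.genideal_minimal[OF K])
        moreover have "x \<in> Idl\<^bsub>P\<^esub> F" using F(3) x y by blast
        ultimately show "y \<in> Idl\<^bsub>S\<^esub> (h ` F)" using x by blast
      qed
    qed
    then show "\<exists>A\<subseteq>carrier S. finite A \<and> J = Idl\<^bsub>S\<^esub> A" using hF F(2) by blast
  qed
qed

lemma (in field) field_noetherian: "noetherian_ring R"
proof (rule noetherian_ringI)
  fix I assume "ideal I R"
  then have "I = {\<zero>} \<or> I = carrier R" using all_ideals by blast
  then show "\<exists>A\<subseteq>carrier R. finite A \<and> I = Idl A"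
  proof
    assume "I = {\<zero>}" then show ?thesis using genideal_zero by (intro exI[of _ "{\<zero>}"]) auto
  next
    assume "I = carrier R" then show ?thesis using genideal_one by (intro exI[of _ "{\<one>}"]) auto
  qed
qed

lemma (in domain) noeth_simple_ext:
  assumes A: "subring A R" and N: "noetherian_ring (R\<lparr>carrier := A\<rparr>)" and s: "s \<in> carrier R"
  shows "noetherian_ring (R\<lparr>carrier := simple_extension A s\<rparr>)"
proof -
  let ?E = "simple_extension A s"
  have AR: "A \<subseteq> carrier R" using subringE(1)[OF A] .
  have img: "(\<lambda>p. eval p s) ` carrier (A[X]) = ?E"
    using simple_extension_as_eval_img[OF AR s] by simp
  have Esub: "subring ?E R" by (rule simple_extension_is_subring[OF A s])
  have hom: "(\<lambda>p. eval p s) \<in> ring_hom (A[X]) R" by (rule eval_is_hom[OF A s])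
  have hom': "(\<lambda>p. eval p s) \<in> ring_hom (A[X]) (R\<lparr>carrier := ?E\<rparr>)"
    using hom img unfolding ring_hom_def by auto
  have "ring_hom_ring (A[X]) (R\<lparr>carrier := ?E\<rparr>) (\<lambda>p. eval p s)"
    by (rule ring_hom_ringI2[OF univ_poly_is_ring[OF A] subring_is_ring[OF Esub] hom'])
  moreover have "noetherian_ring (A[X])" by (rule hilbert_basis[OF A N])
  ultimately show ?thesis using img by (intro noeth_image[of "A[X]" _ "\<lambda>p. eval p s"]) auto
qed

lemma (in domain) gen_insert_simple_ext:
  assumes H: "H \<subseteq> carrier R" and s: "s \<in> carrier R"
  shows "generate_ring R (insert s H) = simple_extension (generate_ring R H) s"
proof -
  have G: "subring (generate_ring R H) R" using generate_ring_is_subring[OF H] .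
  have "simple_extension (generate_ring R H) s =
        \<Inter>{K'. subring K' R \<and> generate_ring R H \<subseteq> K' \<and> s \<in> K'}"
    by (rule simple_extension_minimal[OF G s])
  also have "\<dots> = \<Inter>{K'. subring K' R \<and> insert s H \<subseteq> K'}"
  proof -
    have "(subring K' R \<and> generate_ring R H \<subseteq> K' \<and> s \<in> K') \<longleftrightarrow> (subring K' R \<and> insert s H \<subseteq> K')" for K'
      using generate_ring_min_subring1[OF H, of K'] generate_ring.incl[of _ H R] by blast
    then show ?thesis by simp
  qed
  also have "\<dots> = generate_ring R (insert s H)"
    using generate_ring_min_subring2[of "insert s H"] H s by simp
  finally show ?thesis by simp
qed

lemma (in domain) noeth_gen:
  assumes K: "subfield K R" and S: "finite S" "S \<subseteq> carrier R"
  shows "noetherian_ring (R\<lparr>carrier := generate_ring R (K \<union> S)\<rparr>)"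
  using S
proof (induct S rule: finite_induct)
  case empty
  have Ksub: "subring K R" using subfieldE(1)[OF K] .
  have KR: "K \<subseteq> carrier R" using subringE(1)[OF Ksub] .
  have "generate_ring R K = K"
    using generate_ring_min_subring1[OF KR Ksub] generate_ring.incl[of _ K R] by blast
  moreover have "field (R\<lparr>carrier := K\<rparr>)" using subfield_iff(2)[OF K] .
  ultimately show ?case using field.field_noetherian by simp
next
  case (insert s S)
  have KR: "K \<subseteq> carrier R" using subringE(1)[OF subfieldE(1)[OF K]] .
  have H: "K \<union> S \<subseteq> carrier R" using insert KR by auto
  have s: "s \<in> carrier R" using insert by auto
  have "K \<union> insert s S = insert s (K \<union> S)" by auto
  then have eq: "generate_ring R (K \<union> insert s S) = simple_extension (generate_ring R (K \<union> S)) s"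
    using gen_insert_simple_ext[OF H s] by simp
  show ?case unfolding eq
    by (rule noeth_simple_ext[OF generate_ring_is_subring[OF H] _ s]) (use insert in auto)
qed

lemma affine_noetherian:
  assumes "affine_domain R K"
  shows "noetherian_domain R"
proof -
  interpret domain R using assms unfolding affine_domain_def by blast
  obtain S where S: "finite S" "S \<subseteq> carrier R" "generate_ring R (K \<union> S) = carrier R"
    and K: "subfield K R" using assms unfolding affine_domain_def by blast
  have "noetherian_ring (R\<lparr>carrier := carrier R\<rparr>)" using noeth_gen[OF K S(1,2)] S(3) by simp
  then have "noetherian_ring R" by simp
  then show ?thesis by (simp add: noetherian_domain_def domain_axioms)
qed

primrec pprod :: "('a, 'b) ring_scheme \<Rightarrow> (nat \<Rightarrow> 'a) \<Rightarrow> nat \<Rightarrow> 'a" where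
  "pprod R p 0 = \<one>\<^bsub>R\<^esub>" | "pprod R p (Suc n) = pprod R p n \<otimes>\<^bsub>R\<^esub> p n"

lemma (in cring) divides_one_unit:
  assumes "p \<in> carrier R" "p divides \<one>" shows "p \<in> Units R"
proof -
  obtain c where c: "c \<in> carrier R" "\<one> = p \<otimes> c" using assms(2) unfolding factor_def by blast
  then show ?thesis using assms(1) unfolding Units_def by (auto intro!: bexI[of _ c] simp: m_comm)
qed

lemma (in domain) nodiv:
  assumes K: "subfield K R" and f: "f \<in> carrier R" and l: "l \<in> K" and m: "m \<in> K" and lm: "l \<noteq> m"
    and pr: "prime R (f \<ominus> l)"
  shows "\<not> (f \<ominus> l) divides (f \<ominus> m)"
proof
  have KR: "K \<subseteq> carrier R" using subringE(1)[OF subfieldE(1)[OF K]] .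
  have lc: "l \<in> carrier R" and mc: "m \<in> carrier R" using l m KR by auto
  assume "(f \<ominus> l) divides (f \<ominus> m)"
  then obtain t where t: "t \<in> carrier R" "f \<ominus> m = (f \<ominus> l) \<otimes> t" unfolding factor_def by blast
  have dK: "l \<ominus> m \<in> K - {\<zero>}"
  proof -
    have "l \<ominus> m \<in> K" using l m subringE(5,7)[OF subfieldE(1)[OF K]] unfolding a_minus_def by blast
    moreover have "l \<ominus> m \<noteq> \<zero>" using lm lc mc by (simp add: r_right_minus_eq)
    ultimately show ?thesis by blast
  qed
  define u where "u = inv (l \<ominus> m)"
  have u: "u \<in> carrier R" "(l \<ominus> m) \<otimes> u = \<one>" using subfield_m_inv[OF K dK] KR unfolding u_def by auto
  have eq: "(f \<ominus> l) \<otimes> (t \<ominus> \<one>) = l \<ominus> m"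
  proof -
    have "(f \<ominus> l) \<otimes> (t \<ominus> \<one>) = (f \<ominus> l) \<otimes> t \<ominus> (f \<ominus> l)" using f lc t by algebra
    also have "\<dots> = (f \<ominus> m) \<ominus> (f \<ominus> l)" using t by simp
    also have "\<dots> = l \<ominus> m" using f lc mc by algebra
    finally show ?thesis .
  qed
  have "(f \<ominus> l) \<otimes> ((t \<ominus> \<one>) \<otimes> u) = \<one>"
    using eq u f lc t by (simp add: m_assoc[symmetric])
  then have "(f \<ominus> l) divides \<one>" unfolding factor_def using t u by (intro bexI[of _ "(t \<ominus> \<one>) \<otimes> u"]) auto
  then have "(f \<ominus> l) \<in> Units R" using divides_one_unit f lc by simp
  then show False using pr unfolding prime_def by blast
qed

lemma (in noetherian_domain) finitely_many_linear_divisors: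
  assumes K: "subfield K R" and f: "f \<in> carrier R" and c: "c \<in> carrier R" "c \<noteq> \<zero>"
  shows "finite {l \<in> K. ring_prime (f \<ominus> l) \<and> (f \<ominus> l) divides c}"
proof (rule ccontr)
  have KR: "K \<subseteq> carrier R" using subringE(1)[OF subfieldE(1)[OF K]] .
  assume "infinite {l \<in> K. ring_prime (f \<ominus> l) \<and> (f \<ominus> l) divides c}"
  then obtain lam :: "nat \<Rightarrow> 'a" where lam: "inj lam" "range lam \<subseteq> {l \<in> K. ring_prime (f \<ominus> l) \<and> (f \<ominus> l) divides c}"
    using infinite_countable_subset by blast
  define p where "p n = f \<ominus> lam n" for n
  have lamK: "lam n \<in> K" for n using lam by blast
  have pc: "p n \<in> carrier R" for n using f lamK KR unfolding p_def by blast
  have pr: "prime R (p n)" "p n \<noteq> \<zero>" for n using lam unfolding p_def ring_prime_def by blast+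
  have pdiv: "p n divides c" for n using lam unfolding p_def by blast
  have pnd: "\<not> p m divides p n" if "m \<noteq> n" for m n
    unfolding p_def using nodiv[OF K f lamK lamK _ pr(1)[of m, unfolded p_def]] lam(1) that
    by (metis injD)
  define P where "P = pprod R p"
  have Pc: "P n \<in> carrier R" for n unfolding P_def by (induct n) (auto simp: pc)
  have Pnz: "P n \<noteq> \<zero>" for n
  proof (induct n)
    case 0 then show ?case by (simp add: P_def)
  next
    case (Suc n)
    have "P n \<otimes> p n \<noteq> \<zero>" using Suc Pc[of n] pc[of n] pr(2)[of n] by (simp add: integral_iff)
    then show ?case by (simp add: P_def)
  qed
  have pnP: "\<not> p m divides P n" if "n \<le> m" for m n
    using that
  proof (induct n)
    case 0
    show ?case
    proof
      assume "p m divides P 0"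
      then have "p m \<in> Units R" using divides_one_unit pc unfolding P_def by simp
      then show False using pr(1)[of m] unfolding prime_def by blast
    qed
  next
    case (Suc n)
    show ?case
    proof
      assume "p m divides P (Suc n)"
      then have "p m divides P n \<otimes> p n" unfolding P_def by simp
      then have "p m divides P n \<or> p m divides p n" using pr(1)[of m] Pc pc unfolding prime_def by blast
      then show False using Suc pnd[of m n] by auto
    qed
  qed
  have Pdiv: "P n divides c" for n
  proof (induct n)
    case 0 then show ?case using c unfolding P_def factor_def by (intro bexI[of _ c]) auto
  next
    case (Suc n)
    then obtain y where y: "y \<in> carrier R" "c = P n \<otimes> y" unfolding factor_def by blast
    have "p n divides P n \<otimes> y" using pdiv y by simp
    then have "p n divides P n \<or> p n divides y" using pr(1)[of n] Pc y unfolding prime_def by blast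
    then have "p n divides y" using pnP[of n n] by auto
    then obtain z where z: "z \<in> carrier R" "y = p n \<otimes> z" unfolding factor_def by blast
    have "c = P (Suc n) \<otimes> z" using y z Pc pc unfolding P_def by (simp add: m_assoc)
    then show ?case unfolding factor_def using z by blast
  qed
  define I where "I n = {x \<in> carrier R. \<exists>z\<in>carrier R. P n \<otimes> x = c \<otimes> z}" for n
  have Iid: "ideal (I n) R" for n
  proof (rule idealI[OF ring_axioms])
    show "subgroup (I n) (add_monoid R)"
    proof (rule subgroup.intro)
      show "I n \<subseteq> carrier (add_monoid R)" unfolding I_def by auto
      show "\<one>\<^bsub>add_monoid R\<^esub> \<in> I n" unfolding I_def using Pc c by (auto intro!: bexI[of _ \<zero>])
    next
      fix x y assume "x \<in> I n" "y \<in> I n"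
      then obtain zx zy where zx: "x \<in> carrier R" "zx \<in> carrier R" "P n \<otimes> x = c \<otimes> zx"
        and zy: "y \<in> carrier R" "zy \<in> carrier R" "P n \<otimes> y = c \<otimes> zy" unfolding I_def by blast
      have "P n \<otimes> (x \<oplus> y) = c \<otimes> (zx \<oplus> zy)" using zx zy Pc c by (simp add: r_distr)
      then show "x \<otimes>\<^bsub>add_monoid R\<^esub> y \<in> I n" unfolding I_def using zx zy by auto
      have "P n \<otimes> (\<ominus> x) = c \<otimes> (\<ominus> zx)" using zx Pc c by (simp add: r_minus)
      then show "inv\<^bsub>add_monoid R\<^esub> x \<in> I n" unfolding I_def using zx by (auto simp: a_inv_def[symmetric])
    qed
  next
    fix a x assume a: "a \<in> I n" and x: "x \<in> carrier R"
    then obtain z where z: "a \<in> carrier R" "z \<in> carrier R" "P n \<otimes> a = c \<otimes> z" unfolding I_def by blast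
    have "P n \<otimes> (x \<otimes> a) = x \<otimes> (P n \<otimes> a)" using z(1) x Pc[of n] by algebra
    also have "\<dots> = x \<otimes> (c \<otimes> z)" by (simp only: z(3))
    also have "\<dots> = c \<otimes> (x \<otimes> z)" using z(2) x c(1) by algebra
    finally have "P n \<otimes> (x \<otimes> a) = c \<otimes> (x \<otimes> z)" .
    then have xa: "x \<otimes> a \<in> I n" unfolding I_def using z x by auto
    then show "x \<otimes> a \<in> I n" .
    show "a \<otimes> x \<in> I n" using xa m_comm[OF z(1) x] by simp
  qed
  have Imono1: "I n \<subseteq> I (Suc n)" for n
  proof
    fix x assume "x \<in> I n"
    then obtain z where z: "x \<in> carrier R" "z \<in> carrier R" "P n \<otimes> x = c \<otimes> z" unfolding I_def by blast
    have "P (Suc n) \<otimes> x = p n \<otimes> (P n \<otimes> x)" using z Pc[of n] pc[of n] unfolding P_def using z(1) Pc[of n] pc[of n] by (simp add: m_assoc m_lcomm)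
    also have "\<dots> = p n \<otimes> (c \<otimes> z)" by (simp only: z(3))
    also have "\<dots> = c \<otimes> (p n \<otimes> z)" using z(2) pc[of n] c(1) by algebra
    finally have "P (Suc n) \<otimes> x = c \<otimes> (p n \<otimes> z)" .
    then show "x \<in> I (Suc n)" unfolding I_def using z pc by auto
  qed
  have Imono: "I m \<subseteq> I n" if "m \<le> n" for m n
    using that by (induct n) (use Imono1 in \<open>auto simp: le_Suc_eq\<close>)
  have "subset.chain {I. ideal I R} (range I)"
  proof -
    have ch: "x \<subseteq> y \<or> y \<subseteq> x" if xy: "x \<in> range I" "y \<in> range I" for x y
    proof -
      obtain i j where ij: "x = I i" "y = I j" using xy by blast
      show ?thesis
      proof (cases "i \<le> j")
        case True then show ?thesis using Imono[OF True] ij by simp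
      next
        case False then have ji: "j \<le> i" by simp
        show ?thesis using Imono[OF ji] ij by simp
      qed
    qed
    show ?thesis unfolding pred_on.chain_def using Iid ch by blast
  qed
  then have "\<Union>(range I) \<in> range I" by (intro ideal_chain_is_trivial) auto
  then obtain m where m: "\<Union>(range I) = I m" by blast
  obtain y where y: "y \<in> carrier R" "c = P (Suc m) \<otimes> y" using Pdiv[of "Suc m"] unfolding factor_def by blast
  have "y \<in> I (Suc m)" unfolding I_def using y Pc by (auto intro!: bexI[of _ \<one>])
  then have "y \<in> I m" using m by blast
  then obtain z where z: "z \<in> carrier R" "P m \<otimes> y = c \<otimes> z" unfolding I_def by blast
  have ynz: "y \<noteq> \<zero>" using y c Pc by auto
  have "P m \<otimes> y = c \<otimes> z" by (rule z(2))
  also have "\<dots> = (P m \<otimes> p m \<otimes> y) \<otimes> z" using y by (simp add: P_def)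
  also have "\<dots> = P m \<otimes> (y \<otimes> (p m \<otimes> z))" using z(1) y(1) Pc[of m] pc[of m] by algebra
  finally have "P m \<otimes> y = P m \<otimes> (y \<otimes> (p m \<otimes> z))" .
  then have "y = y \<otimes> (p m \<otimes> z)" using Pnz Pc y z pc by (simp add: m_lcancel)
  then have "y \<otimes> \<one> = y \<otimes> (p m \<otimes> z)" using y by simp
  then have "\<one> = p m \<otimes> z" by (rule iffD1[OF m_lcancel[OF ynz y(1) one_closed m_closed[OF pc[of m] z(1)]]])
  then have "p m divides \<one>" unfolding factor_def using z by blast
  then have "p m \<in> Units R" using divides_one_unit pc by simp
  then show False using pr(1)[of m] unfolding prime_def by blast
qed

definition mapUP :: "('a \<Rightarrow> 'b) \<Rightarrow> (nat \<Rightarrow> 'a) \<Rightarrow> (nat \<Rightarrow> 'b)" where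
  "mapUP h p = (\<lambda>n. h (p n))"

lemma coeff_UP: "p \<in> carrier (UP R) \<Longrightarrow> coeff (UP R) p n = p n"
  by (simp add: UP_def)

lemma mapUP_closed:
  assumes h: "h \<in> ring_hom R S" and R: "ring R" and S: "ring S" and p: "p \<in> carrier (UP R)"
  shows "mapUP h p \<in> carrier (UP S)"
proof -
  interpret hh: ring_hom_ring R S h using h R S by (intro ring_hom_ringI2)
  from p obtain n where n: "bound \<zero>\<^bsub>R\<^esub> n p" and pc: "\<And>i. p i \<in> carrier R"
    by (auto simp: UP_def up_def Pi_def)
  have "bound \<zero>\<^bsub>S\<^esub> n (mapUP h p)"
    using n by (auto simp: mapUP_def bound_def)
  then show ?thesis using pc by (auto simp: UP_def up_def mapUP_def Pi_def)
qed

lemma mapUP_hom: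
  assumes R: "cring R" and S: "cring S" and h: "h \<in> ring_hom R S"
  shows "mapUP h \<in> ring_hom (UP R) (UP S)"
proof -
  interpret UR: UP_cring R "UP R" using R by (simp add: UP_cring_def)
  interpret US: UP_cring S "UP S" using S by (simp add: UP_cring_def)
  interpret hh: ring_hom_cring R S h using R S h by (intro ring_hom_cringI ring_hom_ringI2) (auto simp: cring_def)
  have cl: "p \<in> carrier (UP R) \<Longrightarrow> mapUP h p \<in> carrier (UP S)" for p
    using mapUP_closed[OF h] R S by (simp add: cring_def)
  have cf: "p \<in> carrier (UP R) \<Longrightarrow> coeff (UP S) (mapUP h p) n = h (coeff (UP R) p n)" for p n
    using cl by (simp add: coeff_UP mapUP_def)
  show ?thesis
  proof (rule ring_hom_memI)
    fix p assume "p \<in> carrier (UP R)" then show "mapUP h p \<in> carrier (UP S)" by (rule cl)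
  next
    fix p q assume p: "p \<in> carrier (UP R)" and q: "q \<in> carrier (UP R)"
    show "mapUP h (p \<otimes>\<^bsub>UP R\<^esub> q) = mapUP h p \<otimes>\<^bsub>UP S\<^esub> mapUP h q"
    proof (rule US.up_eqI)
      fix n
      have "coeff (UP S) (mapUP h (p \<otimes>\<^bsub>UP R\<^esub> q)) n = h (\<Oplus>\<^bsub>R\<^esub>i \<in> {..n}. coeff (UP R) p i \<otimes>\<^bsub>R\<^esub> coeff (UP R) q (n-i))"
        using p q by (simp add: cf)
      also have "\<dots> = (\<Oplus>\<^bsub>S\<^esub>i \<in> {..n}. h (coeff (UP R) p i) \<otimes>\<^bsub>S\<^esub> h (coeff (UP R) q (n-i)))"
        using p q by (simp add: Pi_def comp_def)
      also have "\<dots> = coeff (UP S) (mapUP h p \<otimes>\<^bsub>UP S\<^esub> mapUP h q) n"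
        using p q cl by (simp add: cf)
      finally show "coeff (UP S) (mapUP h (p \<otimes>\<^bsub>UP R\<^esub> q)) n = coeff (UP S) (mapUP h p \<otimes>\<^bsub>UP S\<^esub> mapUP h q) n" .
    qed (use p q cl in auto)
  next
    fix p q assume p: "p \<in> carrier (UP R)" and q: "q \<in> carrier (UP R)"
    show "mapUP h (p \<oplus>\<^bsub>UP R\<^esub> q) = mapUP h p \<oplus>\<^bsub>UP S\<^esub> mapUP h q"
      by (rule US.up_eqI) (use p q cl in \<open>simp_all add: cf\<close>)
  next
    show "mapUP h \<one>\<^bsub>UP R\<^esub> = \<one>\<^bsub>UP S\<^esub>"
      by (rule US.up_eqI) (use cl in \<open>simp_all add: cf\<close>)
  qed
qed

lemma mapUP_monom:
  assumes h: "h \<in> ring_hom R S" and R: "ring R" and S: "ring S" and a: "a \<in> carrier R"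
  shows "mapUP h (monom (UP R) a n) = monom (UP S) (h a) n"
proof -
  interpret hh: ring_hom_ring R S h using h R S by (intro ring_hom_ringI2)
  show ?thesis using a by (auto simp: UP_def mapUP_def fun_eq_iff)
qed

lemma const2_hom:
  assumes R: "cring R" shows "const2 R \<in> ring_hom R (UP (UP R))"
proof -
  interpret UR: UP_cring R "UP R" using R by (simp add: UP_cring_def)
  interpret UUR: UP_cring "UP R" "UP (UP R)" using UR.UP_cring by (simp add: UP_cring_def)
  have "(\<lambda>a. monom (UP (UP R)) a 0) \<circ> (\<lambda>c. monom (UP R) c 0) \<in> ring_hom R (UP (UP R))"
    by (rule ring_hom_trans[OF UR.const_ring_hom UUR.const_ring_hom])
  then show ?thesis unfolding const2_def[abs_def] by (simp add: comp_def)
qed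

lemma eval_natural:
  assumes R: "cring R" and S: "cring S" and h: "h \<in> ring_hom R S" and p: "p \<in> carrier (UP R)"
  shows "mapUP (mapUP h) (eval R (UP (UP R)) (const2 R) (indet_V R \<oplus>\<^bsub>UP (UP R)\<^esub> indet_U R) p)
       = eval S (UP (UP S)) (const2 S) (indet_V S \<oplus>\<^bsub>UP (UP S)\<^esub> indet_U S) (mapUP h p)"
proof -
  interpret UR: UP_cring R "UP R" using R by (simp add: UP_cring_def)
  interpret UUR: UP_cring "UP R" "UP (UP R)" using UR.UP_cring by (simp add: UP_cring_def)
  interpret US: UP_cring S "UP S" using S by (simp add: UP_cring_def)
  interpret UUS: UP_cring "UP S" "UP (UP S)" using US.UP_cring by (simp add: UP_cring_def)
  have h1: "mapUP h \<in> ring_hom (UP R) (UP S)" by (rule mapUP_hom[OF R S h])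
  have h2: "mapUP (mapUP h) \<in> ring_hom (UP (UP R)) (UP (UP S))"
    by (rule mapUP_hom[OF UR.UP_cring US.UP_cring h1])
  have rR: "ring R" "ring S" "ring (UP R)" "ring (UP S)" using R S UR.UP_ring US.UP_ring by (auto simp: cring_def)
  define sR where "sR = indet_V R \<oplus>\<^bsub>UP (UP R)\<^esub> indet_U R"
  define sS where "sS = indet_V S \<oplus>\<^bsub>UP (UP S)\<^esub> indet_U S"
  have sRc: "sR \<in> carrier (UP (UP R))" unfolding sR_def indet_V_def indet_U_def by simp
  have sSc: "sS \<in> carrier (UP (UP S))" unfolding sS_def indet_V_def indet_U_def by simp
  have h1c: "mapUP h (monom (UP R) a n) = monom (UP S) (h a) n" if "a \<in> carrier R" for a n
    by (rule mapUP_monom[OF h rR(1,2) that])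
  have h2c: "mapUP (mapUP h) (monom (UP (UP R)) a n) = monom (UP (UP S)) (mapUP h a) n"
    if "a \<in> carrier (UP R)" for a n
    by (rule mapUP_monom[OF h1 rR(3,4) that])
  have hone: "h \<one>\<^bsub>R\<^esub> = \<one>\<^bsub>S\<^esub>" using h by (simp add: ring_hom_one)
  have mV: "mapUP (mapUP h) (indet_V R) = indet_V S"
    unfolding indet_V_def by (simp add: h2c h1c hone)
  have mU: "mapUP (mapUP h) (indet_U R) = indet_U S"
    unfolding indet_U_def
    using h2c[of "\<one>\<^bsub>UP R\<^esub>" 1] ring_hom_one[OF h1] by simp
  have ms: "mapUP (mapUP h) sR = sS"
    unfolding sR_def sS_def
    using ring_hom_add[OF h2, of "indet_V R" "indet_U R"] mV mU
    unfolding indet_V_def indet_U_def by simp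
  have mc: "mapUP (mapUP h) (const2 R r) = const2 S (h r)" if "r \<in> carrier R" for r
    unfolding const2_def using that by (simp add: h2c h1c)
  have c2S: "const2 S \<in> ring_hom S (UP (UP S))" by (rule const2_hom[OF S])
  have hS: "(\<lambda>r. const2 S (h r)) \<in> ring_hom R (UP (UP S))"
    using ring_hom_trans[OF h c2S] by (simp add: comp_def)
  interpret U: UP_pre_univ_prop R "UP (UP S)" "\<lambda>r. const2 S (h r)" "UP R"
    by (rule UP_pre_univ_propI[OF R UUS.UP_cring hS])
  interpret UR2: UP_pre_univ_prop R "UP (UP R)" "const2 R" "UP R"
    by (rule UP_pre_univ_propI[OF R UUR.UP_cring const2_hom[OF R]])
  interpret US2: UP_pre_univ_prop S "UP (UP S)" "const2 S" "UP S"
    by (rule UP_pre_univ_propI[OF S UUS.UP_cring c2S])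
  have evR: "eval R (UP (UP R)) (const2 R) sR \<in> ring_hom (UP R) (UP (UP R))"
    by (rule UR2.eval_ring_hom[OF sRc])
  have evS: "eval S (UP (UP S)) (const2 S) sS \<in> ring_hom (UP S) (UP (UP S))"
    by (rule US2.eval_ring_hom[OF sSc])
  define Phi where "Phi = (\<lambda>p. mapUP (mapUP h) (eval R (UP (UP R)) (const2 R) sR p))"
  define Psi where "Psi = (\<lambda>p. eval S (UP (UP S)) (const2 S) sS (mapUP h p))"
  have PhiH: "Phi \<in> ring_hom (UP R) (UP (UP S))"
    using ring_hom_trans[OF evR h2] unfolding Phi_def by (simp add: comp_def)
  have PsiH: "Psi \<in> ring_hom (UP R) (UP (UP S))"
    using ring_hom_trans[OF h1 evS] unfolding Psi_def by (simp add: comp_def)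
  have "Phi p = Psi p"
  proof (rule U.UP_hom_unique[OF U.ring_homD[OF PhiH] _ _ U.ring_homD[OF PsiH] _ _ p sSc])
    show "Phi (monom (UP R) \<one>\<^bsub>R\<^esub> (Suc 0)) = sS"
      unfolding Phi_def using UR2.eval_monom1[OF sRc] ms by simp
    show "Psi (monom (UP R) \<one>\<^bsub>R\<^esub> (Suc 0)) = sS"
      unfolding Psi_def using US2.eval_monom1[OF sSc] h1c[of "\<one>\<^bsub>R\<^esub>" 1] hone by simp
    fix r assume r: "r \<in> carrier R"
    show "Phi (monom (UP R) r 0) = const2 S (h r)"
      unfolding Phi_def using UR2.eval_const[OF sRc r] mc[OF r] by simp
    show "Psi (monom (UP R) r 0) = const2 S (h r)"
      unfolding Psi_def using US2.eval_const[OF sSc] h1c[OF r, of 0] r ring_hom_closed[OF h r] by simp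
  qed
  then show ?thesis unfolding Phi_def Psi_def sR_def sS_def .
qed

lemma (in ring) quot_carrier_repr:
  "Xq \<in> carrier (R Quot I) \<Longrightarrow> \<exists>b\<in>carrier R. Xq = I +> b"
  by (auto simp: FactRing_def A_RCOSETS_def')

lemma (in cring) quot_exp:
  assumes E: "exp_map R K \<phi>" and KR: "K \<subseteq> carrier R"
    and p0: "p0 \<in> carrier R" "\<phi> p0 = up_ring.monom (UP R) p0 0"
    and I_def: "I = PIdl p0"
    and phi1_def: "\<phi>1 = (\<lambda>Xq. (\<lambda>n. I +> up_ring.coeff (UP R) (\<phi> (SOME b. b \<in> Xq)) n))"
  shows "exp_map (R Quot I) ((\<lambda>c. I +> c) ` K) \<phi>1"
    and "\<forall>b\<in>carrier R. \<phi>1 (I +> b) = (\<lambda>n. I +> up_ring.coeff (UP R) (\<phi> b) n)"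
proof -
  interpret UR: UP_cring R "UP R" using is_cring by (simp add: UP_cring_def)
  have Iid: "ideal I R" unfolding I_def by (rule cgenideal_ideal[OF p0(1)])
  interpret I: ideal I R by (rule Iid)
  have Qc: "cring (R Quot I)" by (rule I.quotient_is_cring[OF is_cring])
  interpret Q: cring "R Quot I" by (rule Qc)
  interpret UQ: UP_cring "R Quot I" "UP (R Quot I)" using Qc by (simp add: UP_cring_def)
  define \<pi> where "\<pi> = (\<lambda>x. I +> x)"
  have \<pi>h: "\<pi> \<in> ring_hom R (R Quot I)" unfolding \<pi>_def by (rule I.rcos_ring_hom)
  interpret \<pi>: ring_hom_cring R "R Quot I" \<pi> by (rule ring_hom_cringI[OF is_cring Qc \<pi>h])
  define PPi where "PPi = mapUP \<pi>"
  have PPih: "PPi \<in> ring_hom (UP R) (UP (R Quot I))" unfolding PPi_def by (rule mapUP_hom[OF is_cring Qc \<pi>h])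
  have \<phi>h: "\<phi> \<in> ring_hom R (UP R)" using E unfolding exp_map_def by blast
  interpret \<phi>: ring_hom_cring R "UP R" \<phi> by (rule ring_hom_cringI[OF is_cring UR.UP_cring \<phi>h])
  have \<pi>I: "\<pi> i = \<zero>\<^bsub>R Quot I\<^esub>" if "i \<in> I" for i
    unfolding \<pi>_def using I.a_rcos_const[OF that] by (simp add: FactRing_def)
  have \<pi>add: "\<pi> (y \<oplus> i) = \<pi> y" if "y \<in> carrier R" "i \<in> I" for y i
    using \<pi>I[OF that(2)] that by simp
  have key: "\<phi>1 (I +> b) = PPi (\<phi> b)" if b: "b \<in> carrier R" for b
  proof -
    define b' where "b' = (SOME b'. b' \<in> I +> b)"
    have "b \<in> I +> b" using I.a_rcos_self[OF b] .
    then have b'I: "b' \<in> I +> b" unfolding b'_def by (rule someI)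
    have b'c: "b' \<in> carrier R" by (rule I.a_elemrcos_carrier[OF b b'I])
    have "b' \<ominus> b \<in> I" using I.a_rcos_module_minus[OF ring_axioms b b'c] b'I by simp
    then obtain x where x: "x \<in> carrier R" "b' \<ominus> b = x \<otimes> p0" unfolding I_def cgenideal_def by blast
    have "b' = b \<oplus> x \<otimes> p0" using x b b'c by (metis add.inv_solve_right' add.m_comm m_closed minus_eq p0(1))
    then have "\<phi> b' = \<phi> b \<oplus>\<^bsub>UP R\<^esub> (up_ring.monom (UP R) p0 0 \<otimes>\<^bsub>UP R\<^esub> \<phi> x)"
      using x b p0 by (simp add: UR.m_comm)
    then have cf: "up_ring.coeff (UP R) (\<phi> b') n = up_ring.coeff (UP R) (\<phi> b) n \<oplus> p0 \<otimes> up_ring.coeff (UP R) (\<phi> x) n" for n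
      using x b p0 UR.coeff_monom_mult[of p0 "\<phi> x" 0 n] by simp
    have "I +> up_ring.coeff (UP R) (\<phi> b') n = I +> up_ring.coeff (UP R) (\<phi> b) n" for n
    proof -
      have "p0 \<otimes> up_ring.coeff (UP R) (\<phi> x) n \<in> I" unfolding I_def cgenideal_def
        using x p0 by (auto intro!: exI[of _ "up_ring.coeff (UP R) (\<phi> x) n"] simp: m_comm)
      then show ?thesis using \<pi>add[of "up_ring.coeff (UP R) (\<phi> b) n" "p0 \<otimes> up_ring.coeff (UP R) (\<phi> x) n"] cf b
        unfolding \<pi>_def by simp
    qed
    then show ?thesis unfolding phi1_def b'_def[symmetric] PPi_def mapUP_def \<pi>_def
      using b by (simp add: coeff_UP fun_eq_iff)
  qed
  have key': "\<phi>1 (I +> b) = (\<lambda>n. I +> up_ring.coeff (UP R) (\<phi> b) n)" if b: "b \<in> carrier R" for b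
    using key[OF b] b unfolding PPi_def mapUP_def \<pi>_def by (simp add: coeff_UP)
  then show "\<forall>b\<in>carrier R. \<phi>1 (I +> b) = (\<lambda>n. I +> up_ring.coeff (UP R) (\<phi> b) n)" by blast
  have keyc: "\<phi>1 (\<pi> b) = PPi (\<phi> b)" if "b \<in> carrier R" for b using key[OF that] unfolding \<pi>_def .
  have repr: "\<exists>b\<in>carrier R. Xq = \<pi> b" if "Xq \<in> carrier (R Quot I)" for Xq
    using quot_carrier_repr[OF that] unfolding \<pi>_def .
  show "exp_map (R Quot I) ((\<lambda>c. I +> c) ` K) \<phi>1"
    unfolding exp_map_def
  proof (intro conjI ballI)
    show "\<phi>1 \<in> ring_hom (R Quot I) (UP (R Quot I))"
    proof (rule ring_hom_memI)
      fix Xq assume "Xq \<in> carrier (R Quot I)"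
      then obtain b where b: "b \<in> carrier R" "Xq = \<pi> b" using repr by blast
      show "\<phi>1 Xq \<in> carrier (UP (R Quot I))" using b keyc ring_hom_closed[OF PPih] by simp
    next
      fix Xq Y assume "Xq \<in> carrier (R Quot I)" "Y \<in> carrier (R Quot I)"
      then obtain b c where b: "b \<in> carrier R" "Xq = \<pi> b" and c: "c \<in> carrier R" "Y = \<pi> c" using repr by meson
      have e1: "Xq \<otimes>\<^bsub>R Quot I\<^esub> Y = \<pi> (b \<otimes> c)" using b c by simp
      have "\<phi>1 (\<pi> (b \<otimes> c)) = PPi (\<phi> (b \<otimes> c))" by (rule keyc) (use b c in simp)
      also have "\<dots> = PPi (\<phi> b \<otimes>\<^bsub>UP R\<^esub> \<phi> c)" using b c by simp
      also have "\<dots> = PPi (\<phi> b) \<otimes>\<^bsub>UP (R Quot I)\<^esub> PPi (\<phi> c)" by (rule ring_hom_mult[OF PPih]) (use b c in simp_all)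
      finally have m1: "\<phi>1 (\<pi> (b \<otimes> c)) = PPi (\<phi> b) \<otimes>\<^bsub>UP (R Quot I)\<^esub> PPi (\<phi> c)" .
      show "\<phi>1 (Xq \<otimes>\<^bsub>R Quot I\<^esub> Y) = \<phi>1 Xq \<otimes>\<^bsub>UP (R Quot I)\<^esub> \<phi>1 Y"
        using keyc[OF b(1)] keyc[OF c(1)] unfolding b(2) c(2) by (simp only: e1[unfolded b(2) c(2)] m1)
      have e2: "Xq \<oplus>\<^bsub>R Quot I\<^esub> Y = \<pi> (b \<oplus> c)" using b c by simp
      have "\<phi>1 (\<pi> (b \<oplus> c)) = PPi (\<phi> (b \<oplus> c))" by (rule keyc) (use b c in simp)
      also have "\<dots> = PPi (\<phi> b \<oplus>\<^bsub>UP R\<^esub> \<phi> c)" using b c by simp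
      also have "\<dots> = PPi (\<phi> b) \<oplus>\<^bsub>UP (R Quot I)\<^esub> PPi (\<phi> c)" by (rule ring_hom_add[OF PPih]) (use b c in simp_all)
      finally have a1: "\<phi>1 (\<pi> (b \<oplus> c)) = PPi (\<phi> b) \<oplus>\<^bsub>UP (R Quot I)\<^esub> PPi (\<phi> c)" .
      show "\<phi>1 (Xq \<oplus>\<^bsub>R Quot I\<^esub> Y) = \<phi>1 Xq \<oplus>\<^bsub>UP (R Quot I)\<^esub> \<phi>1 Y"
        using keyc[OF b(1)] keyc[OF c(1)] unfolding b(2) c(2) by (simp only: e2[unfolded b(2) c(2)] a1)
    next
      have e: "\<one>\<^bsub>R Quot I\<^esub> = \<pi> \<one>" by simp
      have "\<phi>1 (\<pi> \<one>) = PPi (\<phi> \<one>)" by (rule keyc) simp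
      also have "\<dots> = \<one>\<^bsub>UP (R Quot I)\<^esub>" using ring_hom_one[OF PPih] by simp
      finally show "\<phi>1 \<one>\<^bsub>R Quot I\<^esub> = \<one>\<^bsub>UP (R Quot I)\<^esub>" unfolding e .
    qed
  next
    fix C assume "C \<in> (\<lambda>c. I +> c) ` K"
    then obtain k where k: "k \<in> K" "C = \<pi> k" unfolding \<pi>_def by blast
    have kc: "k \<in> carrier R" using k KR by blast
    have "\<phi> k = up_ring.monom (UP R) k 0" using E k unfolding exp_map_def by blast
    then have "\<phi>1 C = PPi (up_ring.monom (UP R) k 0)" using keyc kc k by simp
    also have "\<dots> = up_ring.monom (UP (R Quot I)) (\<pi> k) 0"
      unfolding PPi_def by (rule mapUP_monom[OF \<pi>h ring_axioms Q.ring_axioms kc])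
    finally show "\<phi>1 C = up_ring.monom (UP (R Quot I)) C 0" using k by simp
  next
    fix Xq assume "Xq \<in> carrier (R Quot I)"
    then obtain b where b: "b \<in> carrier R" "Xq = \<pi> b" using repr by blast
    have "up_ring.coeff (UP R) (\<phi> b) 0 = b" using E b unfolding exp_map_def by blast
    then show "up_ring.coeff (UP (R Quot I)) (\<phi>1 Xq) 0 = Xq"
      using b keyc ring_hom_closed[OF PPih] \<phi>.hom_closed[OF b(1)]
      by (simp add: coeff_UP PPi_def mapUP_def)
  next
    fix Xq assume "Xq \<in> carrier (R Quot I)"
    then obtain b where b: "b \<in> carrier R" "Xq = \<pi> b" using repr by blast
    have \<phi>bc: "\<phi> b \<in> carrier (UP R)" using b by simp
    have cc: "up_ring.coeff (UP R) (\<phi> b) n \<in> carrier R" for n using \<phi>bc by simp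
    have E2: "(\<lambda>n. \<phi> (up_ring.coeff (UP R) (\<phi> b) n))
        = UnivPoly.eval R (UP (UP R)) (const2 R) (indet_V R \<oplus>\<^bsub>UP (UP R)\<^esub> indet_U R) (\<phi> b)"
      using E b unfolding exp_map_def by blast
    have "(\<lambda>n. \<phi>1 (up_ring.coeff (UP (R Quot I)) (\<phi>1 Xq) n)) = (\<lambda>n. PPi (\<phi> (up_ring.coeff (UP R) (\<phi> b) n)))"
    proof
      fix n
      have "up_ring.coeff (UP (R Quot I)) (\<phi>1 Xq) n = \<pi> (up_ring.coeff (UP R) (\<phi> b) n)"
        using b keyc ring_hom_closed[OF PPih \<phi>bc] \<phi>bc by (simp add: coeff_UP PPi_def mapUP_def)
      then show "\<phi>1 (up_ring.coeff (UP (R Quot I)) (\<phi>1 Xq) n) = PPi (\<phi> (up_ring.coeff (UP R) (\<phi> b) n))"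
        using keyc[OF cc] by simp
    qed
    also have "\<dots> = mapUP PPi (\<lambda>n. \<phi> (up_ring.coeff (UP R) (\<phi> b) n))" by (simp add: mapUP_def)
    also have "\<dots> = mapUP PPi (UnivPoly.eval R (UP (UP R)) (const2 R) (indet_V R \<oplus>\<^bsub>UP (UP R)\<^esub> indet_U R) (\<phi> b))"
      using E2 by simp
    also have "\<dots> = UnivPoly.eval (R Quot I) (UP (UP (R Quot I))) (const2 (R Quot I))
        (indet_V (R Quot I) \<oplus>\<^bsub>UP (UP (R Quot I))\<^esub> indet_U (R Quot I)) (PPi (\<phi> b))"
      unfolding PPi_def by (rule eval_natural[OF is_cring Qc \<pi>h \<phi>bc])
    also have "\<dots> = UnivPoly.eval (R Quot I) (UP (UP (R Quot I))) (const2 (R Quot I))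
        (indet_V (R Quot I) \<oplus>\<^bsub>UP (UP (R Quot I))\<^esub> indet_U (R Quot I)) (\<phi>1 Xq)"
      using keyc b by simp
    finally show "(\<lambda>n. \<phi>1 (up_ring.coeff (UP (R Quot I)) (\<phi>1 Xq) n)) = UnivPoly.eval (R Quot I) (UP (UP (R Quot I))) (const2 (R Quot I))
        (indet_V (R Quot I) \<oplus>\<^bsub>UP (UP (R Quot I))\<^esub> indet_U (R Quot I)) (\<phi>1 Xq)" .
  qed
qed

theorem lemma3p3:
  fixes R :: "('a, 'm) ring_scheme" and K :: "'a set"
    and \<phi> :: "'a \<Rightarrow> nat \<Rightarrow> 'a" and f :: 'a
  assumes "affine_domain R K"
    and "infinite K"
    and "f \<in> carrier R"
    and "infinite {l \<in> K. ring_prime\<^bsub>R\<^esub> (f \<ominus>\<^bsub>R\<^esub> l)}"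
    and "exp_map R K \<phi>"
    and "nontrivial_exp R \<phi>"
    and "f \<in> invariants R \<phi>"
  shows "\<exists>\<beta>\<in>K. ring_prime\<^bsub>R\<^esub> (f \<ominus>\<^bsub>R\<^esub> \<beta>) \<and>
           (let I = PIdl\<^bsub>R\<^esub> (f \<ominus>\<^bsub>R\<^esub> \<beta>) in
            \<exists>\<phi>1. exp_map (R Quot I) ((\<lambda>c. I +>\<^bsub>R\<^esub> c) ` K) \<phi>1 \<and>
                 nontrivial_exp (R Quot I) \<phi>1 \<and>
                 (\<forall>b\<in>carrier R. \<phi>1 (I +>\<^bsub>R\<^esub> b) = (\<lambda>n. I +>\<^bsub>R\<^esub> coeff (UP R) (\<phi> b) n)))"
proof -
  note aff = assms(1) and f = assms(3) and E = assms(5)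
  have K: "subfield K R" using aff unfolding affine_domain_def by blast
  interpret R: noetherian_domain R by (rule affine_noetherian[OF aff])
  interpret UR: UP_cring R "UP R" using R.is_cring by (simp add: UP_cring_def)
  have KR: "K \<subseteq> carrier R" using subringE(1)[OF subfieldE(1)[OF K]] .
  have \<phi>h: "\<phi> \<in> ring_hom R (UP R)" using E unfolding exp_map_def by blast
  interpret \<phi>: ring_hom_cring R "UP R" \<phi> by (rule ring_hom_cringI[OF R.is_cring UR.UP_cring \<phi>h])
  obtain b where b: "b \<in> carrier R" "\<phi> b \<noteq> up_ring.monom (UP R) b 0"
    using assms(6) unfolding nontrivial_exp_def invariants_def by blast
  have \<phi>bc: "\<phi> b \<in> carrier (UP R)" using b by simp
  have mon: "up_ring.monom (UP R) b 0 = (\<lambda>i. if i = 0 then b else \<zero>\<^bsub>R\<^esub>)" using b by (simp add: UP_def)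
  obtain n where n: "\<phi> b n \<noteq> up_ring.monom (UP R) b 0 n" using b(2) by (meson ext)
  have c0: "\<phi> b 0 = b" using E b \<phi>bc unfolding exp_map_def by (simp add: coeff_UP)
  have n0: "n \<noteq> 0"
  proof
    assume nz: "n = 0"
    show False using n c0 mon unfolding nz by simp
  qed
  define c where "c = \<phi> b n"
  have cnz: "c \<noteq> \<zero>\<^bsub>R\<^esub>" using n n0 mon unfolding c_def by simp
  have cc: "c \<in> carrier R" unfolding c_def using UR.coeff_closed[OF \<phi>bc, of n] \<phi>bc by (simp add: coeff_UP)
  have fin: "finite {l \<in> K. ring_prime\<^bsub>R\<^esub> (f \<ominus>\<^bsub>R\<^esub> l) \<and> (f \<ominus>\<^bsub>R\<^esub> l) divides\<^bsub>R\<^esub> c}"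
    by (rule R.finitely_many_linear_divisors[OF K f cc cnz])
  have "infinite ({l \<in> K. ring_prime\<^bsub>R\<^esub> (f \<ominus>\<^bsub>R\<^esub> l)} - {l \<in> K. ring_prime\<^bsub>R\<^esub> (f \<ominus>\<^bsub>R\<^esub> l) \<and> (f \<ominus>\<^bsub>R\<^esub> l) divides\<^bsub>R\<^esub> c})"
    using assms(4) fin by (rule Diff_infinite_finite[rotated])
  then obtain \<beta> where "\<beta> \<in> {l \<in> K. ring_prime\<^bsub>R\<^esub> (f \<ominus>\<^bsub>R\<^esub> l)} - {l \<in> K. ring_prime\<^bsub>R\<^esub> (f \<ominus>\<^bsub>R\<^esub> l) \<and> (f \<ominus>\<^bsub>R\<^esub> l) divides\<^bsub>R\<^esub> c}"
    using infinite_imp_nonempty by blast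
  then have \<beta>: "\<beta> \<in> K" "ring_prime\<^bsub>R\<^esub> (f \<ominus>\<^bsub>R\<^esub> \<beta>)" "\<not> (f \<ominus>\<^bsub>R\<^esub> \<beta>) divides\<^bsub>R\<^esub> c"
    by auto
  define p0 where "p0 = f \<ominus>\<^bsub>R\<^esub> \<beta>"
  have \<beta>c: "\<beta> \<in> carrier R" using \<beta> KR by blast
  have p0c: "p0 \<in> carrier R" unfolding p0_def using f \<beta>c by simp
  have \<phi>f: "\<phi> f = up_ring.monom (UP R) f 0" using assms(7) unfolding invariants_def by blast
  have \<phi>\<beta>: "\<phi> \<beta> = up_ring.monom (UP R) \<beta> 0" using E \<beta>(1) unfolding exp_map_def by blast
  have \<phi>p0: "\<phi> p0 = up_ring.monom (UP R) p0 0"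
    unfolding p0_def R.minus_eq using f \<beta>c \<phi>f \<phi>\<beta> by (simp add: UR.minus_eq)
  define I where "I = PIdl\<^bsub>R\<^esub> p0"
  define \<phi>1 where "\<phi>1 = (\<lambda>Xq. (\<lambda>n. I +>\<^bsub>R\<^esub> up_ring.coeff (UP R) (\<phi> (SOME b. b \<in> Xq)) n))"
  have QE: "exp_map (R Quot I) ((\<lambda>c. I +>\<^bsub>R\<^esub> c) ` K) \<phi>1"
    and QF: "\<forall>b\<in>carrier R. \<phi>1 (I +>\<^bsub>R\<^esub> b) = (\<lambda>n. I +>\<^bsub>R\<^esub> up_ring.coeff (UP R) (\<phi> b) n)"
    using R.quot_exp[OF E KR p0c \<phi>p0 I_def \<phi>1_def] by blast+
  have Iid: "ideal I R" unfolding I_def by (rule R.cgenideal_ideal[OF p0c])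
  interpret I: ideal I R by (rule Iid)
  have QN: "nontrivial_exp (R Quot I) \<phi>1"
  proof -
    have bQ: "I +>\<^bsub>R\<^esub> b \<in> carrier (R Quot I)" using b(1) by (auto simp: FactRing_def A_RCOSETS_def')
    have "I +>\<^bsub>R\<^esub> b \<notin> invariants (R Quot I) \<phi>1"
    proof
      assume "I +>\<^bsub>R\<^esub> b \<in> invariants (R Quot I) \<phi>1"
      then have "\<phi>1 (I +>\<^bsub>R\<^esub> b) = up_ring.monom (UP (R Quot I)) (I +>\<^bsub>R\<^esub> b) 0"
        unfolding invariants_def by blast
      then have "\<phi>1 (I +>\<^bsub>R\<^esub> b) n = up_ring.monom (UP (R Quot I)) (I +>\<^bsub>R\<^esub> b) 0 n" by simp
      then have "I +>\<^bsub>R\<^esub> c = I" using QF b bQ n0 \<phi>bc unfolding c_def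
        by (simp add: coeff_UP UP_def FactRing_def)
      then have "c \<in> I" using I.rcos_const_imp_mem[OF cc] by simp
      then obtain x where x: "x \<in> carrier R" "c = x \<otimes>\<^bsub>R\<^esub> p0" unfolding I_def cgenideal_def by blast
      have "c = p0 \<otimes>\<^bsub>R\<^esub> x" using x(2) R.m_comm[OF x(1) p0c] by simp
      then have "p0 divides\<^bsub>R\<^esub> c" unfolding factor_def using x(1) by blast
      then show False using \<beta>(3) unfolding p0_def by simp
    qed
    then show ?thesis unfolding nontrivial_exp_def using bQ by blast
  qed
  have QF': "\<forall>b\<in>carrier R. \<phi>1 (I +>\<^bsub>R\<^esub> b) = (\<lambda>n. I +>\<^bsub>R\<^esub> coeff (UP R) (\<phi> b) n)" using QF .
  show ?thesis
    unfolding Let_def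
  proof (intro bexI[of _ \<beta>] conjI exI[of _ \<phi>1])
    show "\<beta> \<in> K" by (rule \<beta>(1))
    show "ring_prime\<^bsub>R\<^esub> (f \<ominus>\<^bsub>R\<^esub> \<beta>)" by (rule \<beta>(2))
    show "exp_map (R Quot PIdl\<^bsub>R\<^esub> (f \<ominus>\<^bsub>R\<^esub> \<beta>)) ((+>\<^bsub>R\<^esub>) (PIdl\<^bsub>R\<^esub> (f \<ominus>\<^bsub>R\<^esub> \<beta>)) ` K) \<phi>1"
      using QE unfolding I_def p0_def by simp
    show "nontrivial_exp (R Quot PIdl\<^bsub>R\<^esub> (f \<ominus>\<^bsub>R\<^esub> \<beta>)) \<phi>1"
      using QN unfolding I_def p0_def by simp
    show "\<forall>b\<in>carrier R. \<phi>1 (PIdl\<^bsub>R\<^esub> (f \<ominus>\<^bsub>R\<^esub> \<beta>) +>\<^bsub>R\<^esub> b) = (\<lambda>n. PIdl\<^bsub>R\<^esub> (f \<ominus>\<^bsub>R\<^esub> \<beta>) +>\<^bsub>R\<^esub> coeff (UP R) (\<phi> b) n)"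
      using QF' unfolding I_def p0_def by simp
  qed
qed

end
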